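(* Let $\ell\ge 3$ and $n_1,\dots,n_\ell$ be integers with $n_i\ge 2$ for all $i$, and let $G$ be the xor-product of the complete graphs $K_{n_1},\dots,K_{n_\ell}$. Then $\omega(G)\ge n_1+\dots+n_\ell-2\ell-1$.
   Context: The xor-product of graphs $G_1,\dots,G_\ell$ has vertex set $V(G_1)\times\dots\times V(G_\ell)$, two vertices $(g_1,\dots,g_\ell)$ and $(g'_1,\dots,g'_\ell)$ being adjacent iff the number of indices $i$ with $g_ig'_i\in E(G_i)$ is odd. $\omega$ denotes the clique number. *)

theory Defs
  imports "HOL-Library.FuncSet"
begin

definition complete_adj :: "nat \<Rightarrow> nat \<Rightarrow> bool" where
  "complete_adj a b \<longleftrightarrow> a \<noteq> b"

text \<open>Complete graph K_n: vertex set {..<n}, adjacency complete_adj.\<close>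

definition xor_vertices :: "nat \<Rightarrow> (nat \<Rightarrow> 'a set) \<Rightarrow> (nat \<Rightarrow> 'a) set" where
  "xor_vertices l V = Pi\<^sub>E {..<l} V"

definition xor_adj :: "nat \<Rightarrow> (nat \<Rightarrow> 'a \<Rightarrow> 'a \<Rightarrow> bool) \<Rightarrow> (nat \<Rightarrow> 'a) \<Rightarrow> (nat \<Rightarrow> 'a) \<Rightarrow> bool" where
  "xor_adj l E g h \<longleftrightarrow> odd (card {i. i < l \<and> E i (g i) (h i)})"

definition is_clique :: "'v set \<Rightarrow> ('v \<Rightarrow> 'v \<Rightarrow> bool) \<Rightarrow> 'v set \<Rightarrow> bool" where
  "is_clique V adj C \<longleftrightarrow> C \<subseteq> V \<and> (\<forall>x\<in>C. \<forall>y\<in>C. x \<noteq> y \<longrightarrow> adj x y)"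

definition clique_number :: "'v set \<Rightarrow> ('v \<Rightarrow> 'v \<Rightarrow> bool) \<Rightarrow> nat" where
  "clique_number V adj = Max (card ` {C. is_clique V adj C})"

end

theory Submission
  imports Defs
begin

lemma generic:
  fixes Q :: "nat \<Rightarrow> nat \<Rightarrow> nat" and A :: "nat \<Rightarrow> nat set" and n :: "nat \<Rightarrow> nat"
  assumes A_sub: "\<forall>i<l. A i \<subseteq> {..<n i}"
    and Qr: "\<forall>i<l. \<forall>k<l. k \<noteq> i \<longrightarrow> Q i k < n k"
    and Qd: "\<forall>i<l. \<forall>k<l. k \<noteq> i \<longrightarrow> Q i k \<notin> A k"
    and Qo: "\<forall>i<l. \<forall>j<l. i \<noteq> j \<longrightarrow> A i \<noteq> {} \<longrightarrow> A j \<noteq> {} \<longrightarrow>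
              odd (card {k. k < l \<and> k \<noteq> i \<and> k \<noteq> j \<and> Q i k \<noteq> Q j k})"
  shows "(\<Sum>i<l. card (A i)) \<le> clique_number (xor_vertices l (\<lambda>i. {..<n i})) (xor_adj l (\<lambda>i. complete_adj))"
proof -
  define vx where "vx = (\<lambda>(i::nat, a::nat). (\<lambda>k. if k < l then (if k = i then a else Q i k) else undefined))"
  define S where "S = (SIGMA i:{..<l}. A i)"
  define C where "C = vx ` S"
  define V where "V = xor_vertices l (\<lambda>i. {..<n i})"
  define adj where "adj = xor_adj l (\<lambda>i. complete_adj)"
  have finA: "finite (A i)" if "i < l" for i using A_sub that finite_subset by blast
  have finS: "finite S" unfolding S_def using finA by auto
  have inj: "inj_on vx S"
  proof (rule inj_onI)
    fix p q assume p: "p \<in> S" and q: "q \<in> S" and e: "vx p = vx q"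
    obtain i a where pi: "p = (i, a)" "i < l" "a \<in> A i" using p S_def by auto
    obtain j b where qj: "q = (j, b)" "j < l" "b \<in> A j" using q S_def by auto
    have e2: "vx (i,a) i = vx (j,b) i" "vx (i,a) j = vx (j,b) j" using e pi qj by auto
    show "p = q"
    proof (cases "i = j")
      case True then show ?thesis using e2 pi qj by (simp add: vx_def)
    next
      case False
      then have "a = Q j i" using e2 pi qj by (simp add: vx_def)
      then show ?thesis using Qd pi qj False by auto
    qed
  qed
  have cardC: "card C = (\<Sum>i<l. card (A i))"
    unfolding C_def using card_image[OF inj] S_def finA by (simp add: card_SigmaI)
  have CV: "C \<subseteq> V"
  proof
    fix x assume "x \<in> C"
    then obtain i a where x: "x = vx (i,a)" "i < l" "a \<in> A i" using C_def S_def by auto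
    show "x \<in> V" unfolding V_def xor_vertices_def
    proof (rule PiE_I)
      fix k assume k: "k \<in> {..<l}"
      show "x k \<in> {..<n k}"
      proof (cases "k = i")
        case True then show ?thesis using x k A_sub by (auto simp: vx_def)
      next
        case False then show ?thesis using x k Qr by (auto simp: vx_def)
      qed
    next
      fix k assume "k \<notin> {..<l}" then show "x k = undefined" using x by (simp add: vx_def)
    qed
  qed
  have clq: "is_clique V adj C"
    unfolding is_clique_def
  proof (intro conjI ballI impI)
    show "C \<subseteq> V" by (rule CV)
  next
    fix x y assume xC: "x \<in> C" and yC: "y \<in> C" and ne: "x \<noteq> y"
    obtain i a where x: "x = vx (i,a)" "i < l" "a \<in> A i" using xC C_def S_def by auto
    obtain j b where y: "y = vx (j,b)" "j < l" "b \<in> A j" using yC C_def S_def by auto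
    show "adj x y"
    proof (cases "i = j")
      case True
      then have "a \<noteq> b" using ne x y by auto
      then have "{k. k < l \<and> complete_adj (x k) (y k)} = {i}"
        using x y True by (auto simp: vx_def complete_adj_def)
      then show ?thesis by (simp add: adj_def xor_adj_def)
    next
      case False
      define D where "D = {k. k < l \<and> k \<noteq> i \<and> k \<noteq> j \<and> Q i k \<noteq> Q j k}"
      have oD: "odd (card D)" unfolding D_def using Qo x y False by blast
      have a1: "a \<noteq> Q j i" using Qd x y False by blast
      have b1: "b \<noteq> Q i j" using Qd x y False by metis
      have "{k. k < l \<and> complete_adj (x k) (y k)} = insert i (insert j D)"
        using x y False a1 b1 by (auto simp: vx_def complete_adj_def D_def)
      moreover have "finite D" unfolding D_def by auto
      moreover have "i \<notin> D" "j \<notin> D" unfolding D_def by auto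
      ultimately have "card {k. k < l \<and> complete_adj (x k) (y k)} = card D + 2"
        using False by simp
      then show ?thesis using oD by (simp add: adj_def xor_adj_def)
    qed
  qed
  have finV: "finite V" unfolding V_def xor_vertices_def by (simp add: finite_PiE)
  have "finite {C. is_clique V adj C}"
    by (rule finite_subset[of _ "Pow V"]) (use finV in \<open>auto simp: is_clique_def\<close>)
  then have "card C \<le> clique_number V adj"
    unfolding clique_number_def using clq by (intro Max_ge) auto
  then show ?thesis using cardC V_def adj_def by simp
qed



lemma card_less_Suc:
  "card {k. k < Suc N \<and> P k} = card {k. k < N \<and> P k} + (if P N then 1 else 0)"
proof (cases "P N")
  case True
  then have "{k. k < Suc N \<and> P k} = insert N {k. k < N \<and> P k}" by auto
  then show ?thesis using True by simp
next
  case False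
  then have "{k. k < Suc N \<and> P k} = {k. k < N \<and> P k}" using less_Suc_eq by auto
  then show ?thesis using False by simp
qed

lemma ar1: "(N - 1) div 2 + (if N \<noteq> 0 \<and> N mod 2 = 0 then 1 else 0) = (Suc N - 1) div 2"
  for N :: nat by (cases N) (auto, presburger+)

lemma base_low:
  "N \<le> i \<Longrightarrow> card {k. k < N \<and> (k \<noteq> 0 \<and> k \<noteq> i \<and> k mod 2 \<noteq> (if k < i then 1 else 0))}
     = (N - 1) div 2"
proof (induction N)
  case 0 then show ?case by simp
next
  case (Suc N)
  then have "N < i" by simp
  then have e: "(N \<noteq> 0 \<and> N \<noteq> i \<and> N mod 2 \<noteq> (if N < i then 1 else 0)) = (N \<noteq> 0 \<and> N mod 2 = 0)"
    by auto
  show ?case unfolding card_less_Suc e using Suc ar1 by simp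
qed

lemma ar2: "(if N mod 2 \<noteq> 0 then 1 else 0) + N div 2 = Suc N div 2" for N :: nat
  by presburger

lemma base_high:
  assumes "1 \<le> i"
  shows "i < N \<Longrightarrow> card {k. k < N \<and> (k \<noteq> 0 \<and> k \<noteq> i \<and> k mod 2 \<noteq> (if k < i then 1 else 0))}
     + (i + 1) div 2 = (i - 1) div 2 + N div 2"
proof (induction N)
  case 0 then show ?case by simp
next
  case (Suc N)
  show ?case
  proof (cases "N = i")
    case True
    have e: "(N \<noteq> 0 \<and> N \<noteq> i \<and> N mod 2 \<noteq> (if N < i then 1 else 0)) = False" using True by auto
    have "(i - 1) div 2 + (i + 1) div 2 = (i - 1) div 2 + Suc i div 2" by simp
    then show ?thesis unfolding card_less_Suc e using base_low[of i i] True by simp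
  next
    case False
    then have "i < N" using Suc by simp
    then have e: "(N \<noteq> 0 \<and> N \<noteq> i \<and> N mod 2 \<noteq> (if N < i then 1 else 0)) = (N mod 2 \<noteq> 0)"
      by auto
    show ?thesis unfolding card_less_Suc e using Suc.IH[OF \<open>i < N\<close>] ar2[of N] by simp
  qed
qed

lemma flip_card:
  assumes "finite B" and "\<And>k. k \<in> D \<longleftrightarrow> ((k \<in> B) \<noteq> (k = x))"
  shows "odd (card D) \<longleftrightarrow> even (card B)"
proof (cases "x \<in> B")
  case True
  then have "D = B - {x}" using assms(2) by auto
  then have "card D = card B - 1" using True assms(1) by simp
  moreover have "card B \<ge> 1" using True assms(1) card_0_eq by fastforce
  ultimately obtain m where "card B = Suc m" "card D = m"
    by (metis Suc_diff_1 less_eq_Suc_le One_nat_def diff_Suc_1)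
  then show ?thesis by simp
next
  case False
  then have "D = insert x B" using assms(2) by auto
  then show ?thesis using False assms(1) by simp
qed


theorem theorem3p3:
  fixes l :: nat and n :: "nat \<Rightarrow> nat"
  assumes "l \<ge> 3" and "\<forall>i<l. n i \<ge> 2"
  shows "int (clique_number (xor_vertices l (\<lambda>i. {..<n i})) (xor_adj l (\<lambda>i. complete_adj)))
           \<ge> (\<Sum>i<l. int (n i)) - 2 * int l - 1"
proof -
  define t where "t = odd (l div 2)"
  define big where "big = (3 \<le> n 2)"
  define c where "c = (\<lambda>k::nat. if t \<and> k = 1 \<and> big then 0 else if t \<and> k = 2 then (if big then 2 else 1) else k mod 2)"
  define Q where "Q = (\<lambda>i k::nat. if i = 0 then c k else if k = 0 then i mod 2 else (if k < i then 1 else (0::nat)))"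
  define A where "A = (\<lambda>i::nat. if i = 2 then {3..<n i} else {2..<n i})"
  define D where "D = (\<lambda>i j. {k. k < l \<and> k \<noteq> i \<and> k \<noteq> j \<and> Q i k \<noteq> Q j k})"
  have Qpos: "0 < i \<Longrightarrow> Q i k = (if k = 0 then i mod 2 else if k < i then 1 else 0)" for i k
    by (simp add: Q_def)
  have Q0: "Q 0 k = c k" for k by (simp add: Q_def)
  have cv: "c k \<le> 1 \<or> (c k = 2 \<and> k = 2 \<and> big)" for k
    using mod_less_divisor[of 2 k] unfolding c_def by auto
  have Qv: "Q i k \<le> 1 \<or> (Q i k = 2 \<and> k = 2 \<and> big)" for i k
  proof (cases "i = 0")
    case True then show ?thesis using cv Q0 by simp
  next
    case False then show ?thesis using Qpos[of i k] mod_less_divisor[of 2 i] by auto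
  qed
  have Dsym: "D i j = D j i" for i j unfolding D_def by (rule Collect_cong) auto
  have A_sub: "\<forall>i<l. A i \<subseteq> {..<n i}" unfolding A_def by auto
  have Qr: "\<forall>i<l. \<forall>k<l. k \<noteq> i \<longrightarrow> Q i k < n k"
  proof (intro allI impI)
    fix i k assume "i < l" "k < l" "k \<noteq> i"
    have "n k \<ge> 2" using assms(2) \<open>k < l\<close> by auto
    then show "Q i k < n k" using Qv[of i k] unfolding big_def by auto
  qed
  have Qd: "\<forall>i<l. \<forall>k<l. k \<noteq> i \<longrightarrow> Q i k \<notin> A k"
  proof (intro allI impI)
    fix i k assume "i < l" "k < l" "k \<noteq> i"
    show "Q i k \<notin> A k" using Qv[of i k] unfolding A_def by auto
  qed
  have pos: "odd (card (D i j))" if "0 < i" "i < j" "j < l" for i j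
  proof -
    have "D i j = {i<..<j} \<union> {k. k = 0 \<and> i mod 2 \<noteq> j mod 2}"
    proof (rule set_eqI)
      fix k
      show "k \<in> D i j \<longleftrightarrow> k \<in> {i<..<j} \<union> {k. k = 0 \<and> i mod 2 \<noteq> j mod 2}"
        using that Qpos[of i k] Qpos[of j k] unfolding D_def by auto
    qed
    moreover have "{i<..<j} \<inter> {k. k = 0 \<and> i mod 2 \<noteq> j mod 2} = {}" by auto
    ultimately have "card (D i j) = card {i<..<j} + card {k::nat. k = 0 \<and> i mod 2 \<noteq> j mod 2}"
      by (simp add: card_Un_disjoint)
    moreover have "card {k::nat. k = 0 \<and> i mod 2 \<noteq> j mod 2} = (if i mod 2 \<noteq> j mod 2 then 1 else 0)"
      by simp
    ultimately have "card (D i j) = (j - i - 1) + (if i mod 2 \<noteq> j mod 2 then 1 else 0)"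
      by simp
    then show ?thesis using that by presburger
  qed
  have zero: "odd (card (D 0 j))" if "0 < j" "j < l" "A j \<noteq> {}" for j
  proof -
    define B where "B = {k. k < l \<and> (k \<noteq> 0 \<and> k \<noteq> j \<and> k mod 2 \<noteq> (if k < j then 1 else 0))}"
    have "card B + (j + 1) div 2 = (j - 1) div 2 + l div 2"
      unfolding B_def using base_high[of j l] that by simp
    moreover have "(j + 1) div 2 = (j - 1) div 2 + 1" using that by presburger
    ultimately have cB: "card B + 1 = l div 2" by simp
    have finB: "finite B" unfolding B_def by auto
    have Dj: "k \<in> D 0 j \<longleftrightarrow> k < l \<and> k \<noteq> 0 \<and> k \<noteq> j \<and> c k \<noteq> (if k < j then 1 else 0)" for k
      unfolding D_def using Q0[of k] Qpos[of j k] that by auto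
    show ?thesis
    proof (cases t)
      case False
      then have "c k = k mod 2" for k unfolding c_def by simp
      then have "D 0 j = B" unfolding B_def using Dj by auto
      then show ?thesis using cB False t_def by presburger
    next
      case True
      define x where "x = (if big then (if j = 1 then 2 else 1) else (2::nat))"
      have j2: "\<not> big \<Longrightarrow> j \<noteq> 2" using that unfolding A_def big_def by auto
      have ck: "c k = (if k = 1 \<and> big then 0 else if k = 2 then (if big then 2 else 1) else k mod 2)" for k
        unfolding c_def using True by simp
      have "k \<in> D 0 j \<longleftrightarrow> ((k \<in> B) \<noteq> (k = x))" for k
      proof (cases "k = 1 \<or> k = 2")
        case True
        then show ?thesis unfolding Dj B_def x_def ck using that j2 \<open>3 \<le> l\<close> by auto
      next
        case False
        then have "x \<noteq> k" unfolding x_def by auto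
        then show ?thesis unfolding Dj B_def ck using False by auto
      qed
      then have "odd (card (D 0 j)) \<longleftrightarrow> even (card B)" using flip_card[OF finB] by blast
      then show ?thesis using cB True t_def by presburger
    qed
  qed
  have Qo: "\<forall>i<l. \<forall>j<l. i \<noteq> j \<longrightarrow> A i \<noteq> {} \<longrightarrow> A j \<noteq> {} \<longrightarrow>
              odd (card {k. k < l \<and> k \<noteq> i \<and> k \<noteq> j \<and> Q i k \<noteq> Q j k})"
  proof (intro allI impI)
    fix i j assume h: "i < l" "j < l" "i \<noteq> j" "A i \<noteq> {}" "A j \<noteq> {}"
    have "odd (card (D i j))"
    proof (cases "i < j")
      case True
      show ?thesis
      proof (cases "i = 0")
        case True then show ?thesis using h zero \<open>i < j\<close> by simp
      next
        case False then show ?thesis using h pos \<open>i < j\<close> by simp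
      qed
    next
      case False
      then have ji: "j < i" using h by simp
      show ?thesis
      proof (cases "j = 0")
        case True then show ?thesis using h zero ji Dsym[of i j] by simp
      next
        case False then show ?thesis using h pos ji Dsym[of i j] by simp
      qed
    qed
    then show "odd (card {k. k < l \<and> k \<noteq> i \<and> k \<noteq> j \<and> Q i k \<noteq> Q j k})" unfolding D_def .
  qed
  have main: "(\<Sum>i<l. card (A i)) \<le> clique_number (xor_vertices l (\<lambda>i. {..<n i})) (xor_adj l (\<lambda>i. complete_adj))"
    by (rule generic[OF A_sub Qr Qd Qo])
  have "(\<Sum>i<l. int (n i) - 2 - (if i = 2 then 1 else 0)) \<le> (\<Sum>i<l. int (card (A i)))"
  proof (rule sum_mono)
    fix i assume "i \<in> {..<l}"
    then show "int (n i) - 2 - (if i = 2 then 1 else 0) \<le> int (card (A i))"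
      using assms(2) unfolding A_def by auto
  qed
  moreover have "(\<Sum>i<l. int (n i) - 2 - (if i = 2 then 1 else 0)) = (\<Sum>i<l. int (n i)) - 2 * int l - 1"
  proof -
    have "(\<Sum>i<l. (if i = 2 then 1 else 0::int)) = 1" using assms(1) by simp
    then show ?thesis by (simp add: sum_subtractf)
  qed
  moreover have "(\<Sum>i<l. int (card (A i))) = int (\<Sum>i<l. card (A i))" by simp
  ultimately show ?thesis using main by linarith
qed

end
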